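(* Let $k\ge1$ and let $H\le\mathrm{Aut}(X^* )$ be generated by $r_0=\sigma(\mathrm{id},\mathrm{id})$, $r_i=(r_{i-1},\mathrm{id})$ for $1\le i\le k$, $b_0=(r_k,b_1)$, $b_1=(r_k,b_2)$, $b_2=(\mathrm{id},b_0)$. Then $H$ is a regular branch group over its commutator subgroup $H'$.
   Context: Let $X=\{0,1\}$, $X^*$ the rooted binary tree of finite words, $G=\mathrm{Aut}(X^* )$. Sections: $g(wv)=g(w)g_w(v)$. Wreath recursion: $g=\sigma^{\varepsilon}(g_0,g_1)$ means $g(xw)=\sigma^\varepsilon(x)g_x(w)$ for $x\in X$, with $\sigma$ the swap of $0,1$. For $g\in G$ and $x\in X$, $\delta_x(g)\in G$ is the automorphism acting as $g$ on the subtree below $x$ (i.e. $xv\mapsto xg(v)$) and trivially elsewhere. An infinite subgroup $H\le G$ is regular branch over $K\le H$ if $K$ is normal of finite index in $H$ and $\delta_x(k)\in K$ for all $k\in K$, $x\in X$. *)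

theory Defs
  imports "HOL-Algebra.Algebra"
begin

text \<open>Letters: False = 0, True = 1. Words of the binary tree are bool lists.\<close>

definition tree_aut :: "(bool list \<Rightarrow> bool list) \<Rightarrow> bool" where
  "tree_aut f \<longleftrightarrow> bij f \<and> (\<forall>w. length (f w) = length w)
     \<and> (\<forall>u v. take (length u) (f (u @ v)) = f u)"

definition AutG :: "(bool list \<Rightarrow> bool list) monoid" where
  "AutG = \<lparr>carrier = {f. tree_aut f}, monoid.mult = (\<lambda>f g. f \<circ> g), one = id\<rparr>"

definition delta :: "bool \<Rightarrow> (bool list \<Rightarrow> bool list) \<Rightarrow> bool list \<Rightarrow> bool list" where
  "delta x g w = (case w of [] \<Rightarrow> [] | y # v \<Rightarrow> (if y = x then x # g v else w))"

definition regular_branch :: "(bool list \<Rightarrow> bool list) set \<Rightarrow> (bool list \<Rightarrow> bool list) set \<Rightarrow> bool" where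
  "regular_branch H K \<longleftrightarrow> subgroup H AutG \<and> infinite H \<and> K \<subseteq> H
     \<and> normal K (AutG\<lparr>carrier := H\<rparr>)
     \<and> finite (rcosets\<^bsub>AutG\<lparr>carrier := H\<rparr>\<^esub> K)
     \<and> (\<forall>g\<in>K. \<forall>x. delta x g \<in> K)"

text \<open>r_0 = sigma(id,id), r_(i+1) = (r_i, id).\<close>
fun rgen :: "nat \<Rightarrow> bool list \<Rightarrow> bool list" where
  "rgen i [] = []"
| "rgen 0 (x # w) = (\<not> x) # w"
| "rgen (Suc i) (x # w) = (if x then x # w else x # rgen i w)"

text \<open>bgen k j for j = 0,1,2: b_0 = (r_k, b_1), b_1 = (r_k, b_2), b_2 = (id, b_0).\<close>
fun bgen :: "nat \<Rightarrow> nat \<Rightarrow> bool list \<Rightarrow> bool list" where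
  "bgen k j [] = []"
| "bgen k j (x # w) =
     (if j = 2 then (if x then x # bgen k 0 w else x # w)
      else (if x then x # bgen k (Suc j) w else x # rgen k w))"

end

theory Submission
  imports Defs
begin

lemma tree_autI:
  assumes "f \<circ> g = id" "g \<circ> f = id" "\<And>w. length (f w) = length w"
    "\<And>u v. take (length u) (f (u @ v)) = f u"
  shows "tree_aut f"
  unfolding tree_aut_def using assms o_bij by blast

lemma tree_aut_len: "tree_aut f \<Longrightarrow> length (f w) = length w"
  unfolding tree_aut_def by blast

lemma tree_aut_take: "tree_aut f \<Longrightarrow> take (length u) (f (u @ v)) = f u"
  unfolding tree_aut_def by blast

lemma tree_aut_bij: "tree_aut f \<Longrightarrow> bij f"
  unfolding tree_aut_def by blast

lemma tree_aut_app: assumes "tree_aut f" shows "f (u @ v) = f u @ drop (length u) (f (u @ v))"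
  using tree_aut_take[OF assms, of u v] by (metis append_take_drop_id)

lemma tree_aut_comp: assumes "tree_aut f" "tree_aut g" shows "tree_aut (f \<circ> g)"
proof -
  have "bij (f \<circ> g)" using assms tree_aut_bij bij_comp by blast
  moreover have "length ((f \<circ> g) w) = length w" for w using assms tree_aut_len by simp
  moreover have "take (length u) ((f \<circ> g) (u @ v)) = (f \<circ> g) u" for u v
  proof -
    have "g (u @ v) = g u @ drop (length u) (g (u @ v))" by (rule tree_aut_app[OF assms(2)])
    then have "take (length u) ((f \<circ> g) (u @ v)) = take (length (g u)) (f (g u @ drop (length u) (g (u @ v))))"
      using tree_aut_len[OF assms(2)] by simp
    also have "\<dots> = f (g u)" by (rule tree_aut_take[OF assms(1)])
    finally show ?thesis by simp
  qed
  ultimately show ?thesis unfolding tree_aut_def by blast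
qed

lemma tree_aut_inv: assumes "tree_aut f" shows "tree_aut (Hilbert_Choice.inv f)"
proof -
  have b: "bij f" using assms tree_aut_bij by blast
  have fi: "f (Hilbert_Choice.inv f w) = w" for w using b by (simp add: bij_is_surj surj_f_inv_f)
  have if_: "Hilbert_Choice.inv f (f w) = w" for w using b by (simp add: bij_is_inj)
  have "bij (Hilbert_Choice.inv f)" using b bij_imp_bij_inv by blast
  moreover have l: "length (Hilbert_Choice.inv f w) = length w" for w
    using tree_aut_len[OF assms, of "Hilbert_Choice.inv f w"] fi by simp
  moreover have "take (length u) (Hilbert_Choice.inv f (u @ v)) = Hilbert_Choice.inv f u" for u v
  proof -
    let ?y = "Hilbert_Choice.inv f (u @ v)"
    have ly: "length u \<le> length ?y" using l by simp
    have "f (take (length u) ?y) = take (length u) (f (take (length u) ?y @ drop (length u) ?y))"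
      using tree_aut_take[OF assms, of "take (length u) ?y" "drop (length u) ?y"] ly by simp
    also have "\<dots> = u" by (simp add: fi)
    finally have "f (take (length u) ?y) = u" .
    then show ?thesis using if_ by metis
  qed
  ultimately show ?thesis unfolding tree_aut_def by blast
qed

lemma tree_aut_id: "tree_aut id"
  unfolding tree_aut_def by simp

lemma group_AutG: "group AutG"
proof (rule groupI)
  show "\<And>x y. x \<in> carrier AutG \<Longrightarrow> y \<in> carrier AutG \<Longrightarrow> x \<otimes>\<^bsub>AutG\<^esub> y \<in> carrier AutG"
    by (simp add: AutG_def tree_aut_comp)
  show "\<one>\<^bsub>AutG\<^esub> \<in> carrier AutG" by (simp add: AutG_def tree_aut_id)
  show "\<And>x y z. x \<otimes>\<^bsub>AutG\<^esub> y \<otimes>\<^bsub>AutG\<^esub> z = x \<otimes>\<^bsub>AutG\<^esub> (y \<otimes>\<^bsub>AutG\<^esub> z)"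
    by (simp add: AutG_def o_assoc)
  show "\<And>x. \<one>\<^bsub>AutG\<^esub> \<otimes>\<^bsub>AutG\<^esub> x = x" by (simp add: AutG_def)
  show "\<exists>y\<in>carrier AutG. y \<otimes>\<^bsub>AutG\<^esub> x = \<one>\<^bsub>AutG\<^esub>" if "x \<in> carrier AutG" for x
  proof (intro bexI)
    have "tree_aut x" using that by (simp add: AutG_def)
    then show "Hilbert_Choice.inv x \<otimes>\<^bsub>AutG\<^esub> x = \<one>\<^bsub>AutG\<^esub>"
      by (simp add: AutG_def tree_aut_bij bij_is_inj)
    show "Hilbert_Choice.inv x \<in> carrier AutG" using \<open>tree_aut x\<close> tree_aut_inv by (simp add: AutG_def)
  qed
qed

interpretation AG: group AutG by (rule group_AutG)

lemma AutG_simps[simp]: "carrier AutG = {f. tree_aut f}" "x \<otimes>\<^bsub>AutG\<^esub> y = x \<circ> y" "\<one>\<^bsub>AutG\<^esub> = id"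
  by (simp_all add: AutG_def)

lemma inv_invol: assumes "tree_aut s" "s \<circ> s = id" shows "inv\<^bsub>AutG\<^esub> s = s"
  using AG.inv_equality[of s s] assms by simp

lemma invol_tree_aut:
  assumes "\<And>w. f (f w) = w" "\<And>w. length (f w) = length w"
    "\<And>u v. take (length u) (f (u @ v)) = f u"
  shows "tree_aut f"
  by (rule tree_autI[where g=f]) (auto simp: assms fun_eq_iff)

lemma rgen_invol: "rgen i (rgen i w) = w"
  by (induction i w rule: rgen.induct) auto
lemma rgen_len: "length (rgen i w) = length w"
  by (induction i w rule: rgen.induct) auto
lemma rgen_take: "take (length u) (rgen i (u @ v)) = rgen i u"
proof (induction u arbitrary: i)
  case (Cons a u i) then show ?case by (cases i) auto
qed simp

lemma rgen_aut: "tree_aut (rgen i)"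
  by (rule invol_tree_aut) (auto simp: rgen_invol rgen_len rgen_take)

lemma bgen_len: "length (bgen k j w) = length w"
  by (induction k j w rule: bgen.induct) (auto simp: rgen_len)
lemma bgen_take: "take (length u) (bgen k j (u @ v)) = bgen k j u"
  by (induction u arbitrary: j) (auto simp: rgen_take)
lemma bgen_invol: "j \<le> 2 \<Longrightarrow> bgen k j (bgen k j w) = w"
  by (induction k j w rule: bgen.induct) (auto simp: rgen_invol)
lemma bgen_aut: "j \<le> 2 \<Longrightarrow> tree_aut (bgen k j)"
  by (rule invol_tree_aut) (auto simp: bgen_invol bgen_len bgen_take)

lemma delta_comp: "delta x (f \<circ> g) = delta x f \<circ> delta x g"
  by (auto simp: fun_eq_iff delta_def split: list.split)
lemma delta_id: "delta x id = id"
  by (auto simp: fun_eq_iff delta_def split: list.split)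
lemma delta_commute: "delta False f \<circ> delta True g = delta True g \<circ> delta False f"
  by (auto simp: fun_eq_iff delta_def split: list.split)
lemma delta_aut: assumes "tree_aut g" shows "tree_aut (delta x g)"
proof (rule tree_autI[where g="delta x (Hilbert_Choice.inv g)"])
  have b: "bij g" using assms tree_aut_bij by blast
  have "g \<circ> Hilbert_Choice.inv g = id" "Hilbert_Choice.inv g \<circ> g = id"
    using b by (auto simp: fun_eq_iff bij_is_inj bij_is_surj surj_f_inv_f)
  then show "delta x g \<circ> delta x (Hilbert_Choice.inv g) = id" "delta x (Hilbert_Choice.inv g) \<circ> delta x g = id"
    by (auto simp: delta_comp[symmetric] delta_id)
  show "length (delta x g w) = length w" for w
    using tree_aut_len[OF assms] by (auto simp: delta_def split: list.split)
  show "take (length u) (delta x g (u @ v)) = delta x g u" for u v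
    using tree_aut_take[OF assms] by (cases u) (auto simp: delta_def)
qed


lemma bgen_0: "bgen k 0 (x#w) = (if x then x # bgen k 1 w else x # rgen k w)" by simp
lemma bgen_1: "bgen k 1 (x#w) = (if x then x # bgen k 2 w else x # rgen k w)" by (simp add: numeral_2_eq_2)
lemma bgen_1': "bgen k (Suc 0) (x#w) = (if x then x # bgen k 2 w else x # rgen k w)" by (simp add: numeral_2_eq_2)
lemma bgen_2: "bgen k 2 (x#w) = (if x then x # bgen k 0 w else x # w)" by simp
declare bgen.simps(2)[simp del]
declare bgen_0[simp] bgen_1[simp] bgen_1'[simp] bgen_2[simp]

lemma conj_r0: "rgen 0 \<circ> rgen (Suc i) \<circ> rgen 0 = delta True (rgen i)"
  by (auto simp: fun_eq_iff delta_def split: list.split)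
lemma conj_b1: "rgen 0 \<circ> bgen k 1 \<circ> rgen 0 = delta False (bgen k 2) \<circ> delta True (rgen k)"
  by (auto simp: fun_eq_iff delta_def split: list.split)
lemma b2_eq: "bgen k 2 = delta False id \<circ> delta True (bgen k 0)"
  by (auto simp: fun_eq_iff delta_def split: list.split)
lemma b0_eq: "bgen k 0 = delta False (rgen k) \<circ> delta True (bgen k 1)"
  by (auto simp: fun_eq_iff delta_def split: list.split)
lemma b1_eq: "bgen k 1 = delta False (rgen k) \<circ> delta True (bgen k 2)"
  by (auto simp: fun_eq_iff delta_def split: list.split)
lemma conj_dT: "rgen 0 \<circ> delta True g \<circ> rgen 0 = delta False g"
  by (auto simp: fun_eq_iff delta_def split: list.split)
lemma b2_rk: "1 \<le> k \<Longrightarrow> bgen k 2 \<circ> rgen k = rgen k \<circ> bgen k 2"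
proof -
  assume "1 \<le> k" then obtain m where k: "k = Suc m" by (cases k) auto
  show ?thesis unfolding k fun_eq_iff o_def
  proof
    fix w show "bgen (Suc m) 2 (rgen (Suc m) w) = rgen (Suc m) (bgen (Suc m) 2 w)"
      by (cases w) auto
  qed
qed
lemma rr: "rgen i \<circ> rgen i = id" by (simp add: fun_eq_iff rgen_invol)
lemma bb: "j \<le> 2 \<Longrightarrow> bgen k j \<circ> bgen k j = id" by (simp add: fun_eq_iff bgen_invol)
lemma rr': "rgen i \<circ> (rgen i \<circ> f) = f" by (simp add: fun_eq_iff rgen_invol)
lemma bb': "bgen k 2 \<circ> (bgen k 2 \<circ> f) = f" by (simp add: fun_eq_iff bgen_invol)

definition gens :: "nat \<Rightarrow> (bool list \<Rightarrow> bool list) set" where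
  "gens k = (\<lambda>i. rgen i) ` {0..k} \<union> {bgen k 0, bgen k 1, bgen k 2}"

definition Aset :: "nat \<Rightarrow> (bool list \<Rightarrow> bool list) set" where
  "Aset k = {id, bgen k 2, rgen k, bgen k 2 \<circ> rgen k}"

lemma gens_aut: "s \<in> gens k \<Longrightarrow> tree_aut s"
  by (auto simp: gens_def rgen_aut bgen_aut)
lemma gens_invol: "s \<in> gens k \<Longrightarrow> s \<circ> s = id"
  by (auto simp: gens_def rr bb)
lemma gens_carrier: "gens k \<subseteq> carrier AutG"
  using gens_aut by auto
lemma gens_inv: "s \<in> gens k \<Longrightarrow> inv\<^bsub>AutG\<^esub> s = s"
  by (simp add: gens_aut gens_invol inv_invol)

context fixes k :: nat assumes k1: "1 \<le> k" begin

lemma comm': "rgen k \<circ> (bgen k 2 \<circ> f) = bgen k 2 \<circ> (rgen k \<circ> f)"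
  using b2_rk[OF k1] by (metis o_assoc)

lemma comm0: "rgen k \<circ> bgen k 2 = bgen k 2 \<circ> rgen k"
  using b2_rk[OF k1] by simp

lemma Aset_mult: "x \<in> Aset k \<Longrightarrow> y \<in> Aset k \<Longrightarrow> x \<circ> y \<in> Aset k"
  unfolding Aset_def using comm0
  by (auto simp: o_assoc[symmetric] rr' bb' comm' rr bb comm0)

lemma Aset_comm: "x \<in> Aset k \<Longrightarrow> y \<in> Aset k \<Longrightarrow> x \<circ> y = y \<circ> x"
  unfolding Aset_def using comm0
  by (auto simp: o_assoc[symmetric] rr' bb' comm' rr bb comm0)

lemma Aset_invol: "x \<in> Aset k \<Longrightarrow> x \<circ> x = id"
  unfolding Aset_def using comm0
  by (auto simp: o_assoc[symmetric] rr' bb' comm' rr bb comm0)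

lemma Aset_aut: "x \<in> Aset k \<Longrightarrow> tree_aut x"
  unfolding Aset_def by (auto simp: tree_aut_id bgen_aut rgen_aut tree_aut_comp)


end


context comm_group begin

lemma finprod_sym_diff:
  assumes S: "finite S" "S \<subseteq> carrier G" "\<And>x. x \<in> S \<Longrightarrow> x \<otimes> x = \<one>"
    and T: "T1 \<subseteq> S" "T2 \<subseteq> S"
  shows "finprod G id T1 \<otimes> finprod G id T2 = finprod G id ((T1 - T2) \<union> (T2 - T1))"
proof -
  let ?A = "T1 - T2" and ?B = "T2 - T1" and ?C = "T1 \<inter> T2"
  have fin: "finite ?A" "finite ?B" "finite ?C" using S T finite_subset by blast+
  have pi: "id \<in> ?A \<rightarrow> carrier G" "id \<in> ?B \<rightarrow> carrier G" "id \<in> ?C \<rightarrow> carrier G"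
    using S T by auto
  have e1: "T1 = ?A \<union> ?C" and e2: "T2 = ?B \<union> ?C" by blast+
  have p1: "finprod G id T1 = finprod G id ?A \<otimes> finprod G id ?C"
    by (subst e1, rule finprod_Un_disjoint) (use fin pi in auto)
  have p2: "finprod G id T2 = finprod G id ?B \<otimes> finprod G id ?C"
    by (subst e2, rule finprod_Un_disjoint) (use fin pi in auto)
  have p3: "finprod G id (?A \<union> ?B) = finprod G id ?A \<otimes> finprod G id ?B"
    by (rule finprod_Un_disjoint) (use fin pi in auto)
  have cc: "finprod G id ?C \<otimes> finprod G id ?C = \<one>"
  proof -
    have "finprod G id ?C \<otimes> finprod G id ?C = finprod G (\<lambda>x. id x \<otimes> id x) ?C"
      using finprod_multf[OF pi(3) pi(3)] by simp
    also have "\<dots> = \<one>" by (rule finprod_one_eqI) (use S T in auto)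
    finally show ?thesis .
  qed
  have cl: "finprod G id ?A \<in> carrier G" "finprod G id ?B \<in> carrier G" "finprod G id ?C \<in> carrier G"
    using pi by (auto intro: finprod_closed)
  have "finprod G id T1 \<otimes> finprod G id T2
      = finprod G id ?A \<otimes> finprod G id ?B \<otimes> (finprod G id ?C \<otimes> finprod G id ?C)"
    unfolding p1 p2 using cl by (simp add: m_ac)
  also have "\<dots> = finprod G id (?A \<union> ?B)" using cl cc p3 by simp
  finally show ?thesis .
qed

end

definition D :: "(bool list \<Rightarrow> bool list) \<Rightarrow> (bool list \<Rightarrow> bool list) \<Rightarrow> bool list \<Rightarrow> bool list"
  where "D x h = delta False x \<circ> delta True h"

lemma D_carrier: "x \<in> carrier AutG \<Longrightarrow> h \<in> carrier AutG \<Longrightarrow> D x h \<in> carrier AutG"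
  by (simp add: D_def delta_aut tree_aut_comp)

lemma D_mult: "D x h \<circ> D y g = D (x \<circ> y) (h \<circ> g)"
proof -
  have "D x h \<circ> D y g = delta False x \<circ> (delta True h \<circ> delta False y) \<circ> delta True g"
    by (simp add: D_def o_assoc)
  also have "\<dots> = delta False x \<circ> (delta False y \<circ> delta True h) \<circ> delta True g"
    by (simp add: delta_commute)
  finally show ?thesis by (simp add: D_def delta_comp o_assoc)
qed

lemma D_id: "D id id = id" by (simp add: D_def delta_id)
lemma D_idT: "D id h = delta True h" by (simp add: D_def delta_id)

lemma D_inv: assumes "x \<in> carrier AutG" "h \<in> carrier AutG"
  shows "inv\<^bsub>AutG\<^esub> (D x h) = D (inv\<^bsub>AutG\<^esub> x) (inv\<^bsub>AutG\<^esub> h)"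
proof (rule AG.inv_equality)
  have "inv\<^bsub>AutG\<^esub> x \<circ> x = id" "inv\<^bsub>AutG\<^esub> h \<circ> h = id"
    using AG.l_inv[OF assms(1)] AG.l_inv[OF assms(2)] by simp_all
  then show "D (inv\<^bsub>AutG\<^esub> x) (inv\<^bsub>AutG\<^esub> h) \<otimes>\<^bsub>AutG\<^esub> D x h = \<one>\<^bsub>AutG\<^esub>"
    by (simp add: D_mult D_id)
  show "D x h \<in> carrier AutG" using assms by (rule D_carrier)
  show "D (inv\<^bsub>AutG\<^esub> x) (inv\<^bsub>AutG\<^esub> h) \<in> carrier AutG"
    using assms by (intro D_carrier AG.inv_closed)
qed

lemma D_commutator: assumes "x \<in> carrier AutG" "h \<in> carrier AutG" "y \<in> carrier AutG" "g \<in> carrier AutG"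
  shows "D x h \<otimes>\<^bsub>AutG\<^esub> D y g \<otimes>\<^bsub>AutG\<^esub> inv\<^bsub>AutG\<^esub> (D x h) \<otimes>\<^bsub>AutG\<^esub> inv\<^bsub>AutG\<^esub> (D y g)
    = D (x \<otimes>\<^bsub>AutG\<^esub> y \<otimes>\<^bsub>AutG\<^esub> inv\<^bsub>AutG\<^esub> x \<otimes>\<^bsub>AutG\<^esub> inv\<^bsub>AutG\<^esub> y)
        (h \<otimes>\<^bsub>AutG\<^esub> g \<otimes>\<^bsub>AutG\<^esub> inv\<^bsub>AutG\<^esub> h \<otimes>\<^bsub>AutG\<^esub> inv\<^bsub>AutG\<^esub> g)"
  using assms by (simp add: D_inv D_mult)

context fixes k :: nat assumes k1: "1 \<le> k" begin

abbreviation "HH \<equiv> generate AutG (gens k)"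

lemma HH_gen: "s \<in> gens k \<Longrightarrow> s \<in> HH" by (rule generate.incl)

lemma HH_3: "a \<in> gens k \<Longrightarrow> b \<in> gens k \<Longrightarrow> c \<in> gens k \<Longrightarrow> a \<circ> b \<circ> c \<in> HH"
  using generate.eng[OF generate.eng[OF generate.incl generate.incl] generate.incl, of a "gens k" b c AutG]
  by simp

lemma HH_sub: "HH \<subseteq> carrier AutG"
  by (rule AG.generate_incl[OF gens_carrier])

lemma lift_gen: assumes "s \<in> gens k" shows "\<exists>x\<in>Aset k. D x s \<in> HH"
proof -
  have r0: "rgen 0 \<in> gens k" by (simp add: gens_def)
  consider (r) i where "i < k" "s = rgen i" | (rk) "s = rgen k" | (b0) "s = bgen k 0"
    | (b1) "s = bgen k 1" | (b2) "s = bgen k 2"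
    using assms unfolding gens_def by (auto simp: le_less)
  then show ?thesis
  proof cases
    case r
    have "D id s = rgen 0 \<circ> rgen (Suc i) \<circ> rgen 0" by (simp add: r D_idT conj_r0)
    moreover have "rgen (Suc i) \<in> gens k" using r by (simp add: gens_def)
    ultimately show ?thesis using HH_3[OF r0 _ r0] by (auto simp: Aset_def)
  next
    case rk
    have "D (bgen k 2) s = rgen 0 \<circ> bgen k 1 \<circ> rgen 0" by (simp only: rk D_def conj_b1)
    moreover have "bgen k 1 \<in> gens k" by (simp add: gens_def)
    ultimately show ?thesis using HH_3[OF r0 _ r0] by (auto simp: Aset_def)
  next
    case b0
    have "D id s = bgen k 2" by (simp add: b0 D_def b2_eq)
    then show ?thesis using HH_gen[of "bgen k 2"] by (auto simp: Aset_def gens_def)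
  next
    case b1
    have "D (rgen k) s = bgen k 0" by (simp add: b1 D_def b0_eq)
    then show ?thesis using HH_gen[of "bgen k 0"] by (auto simp: Aset_def gens_def)
  next
    case b2
    have "D (rgen k) s = bgen k 1" by (simp only: b2 D_def b1_eq)
    then show ?thesis using HH_gen[of "bgen k 1"] by (auto simp: Aset_def gens_def)
  qed
qed

lemma lift: "h \<in> HH \<Longrightarrow> \<exists>x\<in>Aset k. D x h \<in> HH"
proof (induction rule: generate.induct)
  case one
  have "D id id \<in> HH" using generate.one[of AutG "gens k", unfolded AutG_simps(3)] by (simp only: D_id)
  moreover have "id \<in> Aset k" by (simp add: Aset_def)
  ultimately show ?case unfolding AutG_simps(3) by blast
next
  case (incl h) then show ?case by (rule lift_gen)
next
  case (inv h) then show ?case using lift_gen by (simp add: gens_inv)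
next
  case (eng h1 h2)
  then obtain x1 x2 where x: "x1 \<in> Aset k" "x2 \<in> Aset k" "D x1 h1 \<in> HH" "D x2 h2 \<in> HH" by blast
  have "D (x1 \<circ> x2) (h1 \<circ> h2) \<in> HH" using generate.eng[OF x(3) x(4)] by (simp only: AutG_simps D_mult)
  then show ?case using Aset_mult[OF k1 x(1,2)] unfolding AutG_simps by blast
qed

abbreviation "KK \<equiv> derived AutG HH"

lemma KK_sub: "KK \<subseteq> HH"
  using AG.derived_incl[OF subset_refl AG.generate_is_subgroup[OF gens_carrier]] .

lemma dT_derived_set: assumes "g \<in> derived_set AutG HH" shows "delta True g \<in> derived_set AutG HH"
proof -
  from assms obtain a b where ab: "a \<in> HH" "b \<in> HH"
    "g = a \<otimes>\<^bsub>AutG\<^esub> b \<otimes>\<^bsub>AutG\<^esub> inv\<^bsub>AutG\<^esub> a \<otimes>\<^bsub>AutG\<^esub> inv\<^bsub>AutG\<^esub> b" by blast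
  obtain x where x: "x \<in> Aset k" "D x a \<in> HH" using lift ab(1) by blast
  obtain y where y: "y \<in> Aset k" "D y b \<in> HH" using lift ab(2) by blast
  have c: "a \<in> carrier AutG" "b \<in> carrier AutG" "x \<in> carrier AutG" "y \<in> carrier AutG"
    using ab HH_sub x y Aset_aut[OF k1] by auto
  have ix: "inv\<^bsub>AutG\<^esub> x = x" "inv\<^bsub>AutG\<^esub> y = y"
    using inv_invol Aset_aut[OF k1] Aset_invol[OF k1] x y by auto
  have "x \<otimes>\<^bsub>AutG\<^esub> y \<otimes>\<^bsub>AutG\<^esub> inv\<^bsub>AutG\<^esub> x \<otimes>\<^bsub>AutG\<^esub> inv\<^bsub>AutG\<^esub> y = id"
  proof -
    have "x \<circ> y \<circ> x \<circ> y = x \<circ> (y \<circ> x) \<circ> y" by (simp add: o_assoc)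
    also have "\<dots> = x \<circ> (x \<circ> y) \<circ> y" using Aset_comm[OF k1 y(1) x(1)] by simp
    also have "\<dots> = (x \<circ> x) \<circ> (y \<circ> y)" by (simp add: o_assoc)
    finally show ?thesis using ix Aset_invol[OF k1] x y by simp
  qed
  then have "D x a \<otimes>\<^bsub>AutG\<^esub> D y b \<otimes>\<^bsub>AutG\<^esub> inv\<^bsub>AutG\<^esub> (D x a) \<otimes>\<^bsub>AutG\<^esub> inv\<^bsub>AutG\<^esub> (D y b)
     = delta True g"
    using D_commutator[OF c(3,1,4,2)] ab(3) by (simp add: D_idT)
  then show ?thesis using x(2) y(2) by blast
qed

lemma dT_KK: "g \<in> KK \<Longrightarrow> delta True g \<in> KK"
  unfolding derived_def
proof (induction rule: generate.induct)
  case one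
  show ?case using generate.one[of AutG, unfolded AutG_simps(3)] by (simp only: AutG_simps(3) delta_id)
next
  case (incl h)
  show ?case by (rule generate.incl[OF dT_derived_set[OF incl]])
next
  case (inv h)
  have hc: "h \<in> carrier AutG" using subsetD[OF AG.derived_set_in_carrier[OF HH_sub] inv] .
  have "delta True (inv\<^bsub>AutG\<^esub> h) = inv\<^bsub>AutG\<^esub> (delta True h)"
  proof -
    have i: "inv\<^bsub>AutG\<^esub> id = id" using inv_invol[OF tree_aut_id] by (simp only: id_o)
    have c: "id \<in> carrier AutG" using tree_aut_id by (simp only: AutG_simps mem_Collect_eq)
    show ?thesis using D_inv[OF c hc] unfolding i D_idT by (rule sym)
  qed
  then show ?case using generate.inv[OF dT_derived_set[OF inv]] by (simp only:)
next
  case (eng h1 h2)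
  have "delta True (h1 \<otimes>\<^bsub>AutG\<^esub> h2) = delta True h1 \<otimes>\<^bsub>AutG\<^esub> delta True h2"
    by (simp only: AutG_simps delta_comp)
  then show ?case using generate.eng[OF eng.IH] by (simp only:)
qed

lemma dF_KK: assumes "g \<in> KK" shows "delta False g \<in> KK"
proof -
  let ?d = "delta True g"
  have d: "?d \<in> KK" using dT_KK[OF assms] .
  have dH: "?d \<in> HH" using d KK_sub by blast
  have dc: "?d \<in> carrier AutG" using dH HH_sub by blast
  have r0: "rgen 0 \<in> HH" by (rule HH_gen) (simp add: gens_def)
  have ir0: "inv\<^bsub>AutG\<^esub> (rgen 0) = rgen 0" by (rule gens_inv) (simp add: gens_def)
  have m: "rgen 0 \<otimes>\<^bsub>AutG\<^esub> ?d \<otimes>\<^bsub>AutG\<^esub> inv\<^bsub>AutG\<^esub> (rgen 0) \<otimes>\<^bsub>AutG\<^esub> inv\<^bsub>AutG\<^esub> ?d \<in> derived_set AutG HH"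
    by (intro UN_I[OF r0] UN_I[OF dH]) simp
  have e: "rgen 0 \<otimes>\<^bsub>AutG\<^esub> ?d \<otimes>\<^bsub>AutG\<^esub> inv\<^bsub>AutG\<^esub> (rgen 0) \<otimes>\<^bsub>AutG\<^esub> inv\<^bsub>AutG\<^esub> ?d \<otimes>\<^bsub>AutG\<^esub> ?d \<in> KK"
    using generate.eng[OF generate.incl[OF m] d[unfolded derived_def]] unfolding derived_def .
  have "rgen 0 \<otimes>\<^bsub>AutG\<^esub> ?d \<otimes>\<^bsub>AutG\<^esub> inv\<^bsub>AutG\<^esub> (rgen 0) \<otimes>\<^bsub>AutG\<^esub> inv\<^bsub>AutG\<^esub> ?d \<otimes>\<^bsub>AutG\<^esub> ?d
     = rgen 0 \<circ> ?d \<circ> rgen 0 \<circ> (inv\<^bsub>AutG\<^esub> ?d \<otimes>\<^bsub>AutG\<^esub> ?d)"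
    unfolding ir0 AutG_simps by (simp only: o_assoc)
  also have "\<dots> = delta False g" using AG.l_inv[OF dc] unfolding AutG_simps
    by (simp only: o_id conj_dT)
  finally show ?thesis using e by (simp only:)
qed


lemma HH_subgroup: "subgroup HH AutG"
  by (rule AG.generate_is_subgroup[OF gens_carrier])

lemma KK_in: "a \<in> HH \<Longrightarrow> b \<in> HH \<Longrightarrow>
  a \<otimes>\<^bsub>AutG\<^esub> b \<otimes>\<^bsub>AutG\<^esub> inv\<^bsub>AutG\<^esub> a \<otimes>\<^bsub>AutG\<^esub> inv\<^bsub>AutG\<^esub> b \<in> KK"
  unfolding derived_def
  apply (rule generate.incl)
  apply (rule UN_I[of a], assumption)
  apply (rule UN_I[of b], assumption)
  by simp

lemma fix_short: "g [] = [] \<Longrightarrow> length w \<le> m \<Longrightarrow> (delta True ^^ m) g w = w"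
proof (induction m arbitrary: w)
  case 0 then show ?case by simp
next
  case (Suc m) then show ?case by (cases w) (auto simp: delta_def)
qed

lemma pref_rep: "(delta True ^^ n) g (replicate n True @ u) = replicate n True @ g u"
  by (induction n) (auto simp: delta_def)

lemma KK_iter: "g \<in> KK \<Longrightarrow> (delta True ^^ n) g \<in> KK"
  by (induction n) (auto intro: dT_KK)

lemma HH_infinite: "infinite HH"
proof -
  let ?r0 = "rgen 0" and ?r1 = "rgen (Suc 0)"
  have g0: "?r0 \<in> gens k" and g1: "?r1 \<in> gens k" using k1 by (auto simp: gens_def)
  let ?c = "?r0 \<otimes>\<^bsub>AutG\<^esub> ?r1 \<otimes>\<^bsub>AutG\<^esub> inv\<^bsub>AutG\<^esub> ?r0 \<otimes>\<^bsub>AutG\<^esub> inv\<^bsub>AutG\<^esub> ?r1"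
  have cK: "?c \<in> KK" using KK_in[OF HH_gen[OF g0] HH_gen[OF g1]] .
  have ce: "?c = ?r0 \<circ> ?r1 \<circ> ?r0 \<circ> ?r1" using gens_inv[OF g0] gens_inv[OF g1] by simp
  have c0: "?c [] = []" unfolding gens_inv[OF g0] gens_inv[OF g1] by simp
  have c1: "?c [False, False] = [False, True]" unfolding gens_inv[OF g0] gens_inv[OF g1] by simp
  define f where "f i = (delta True ^^ (2*i)) ?c" for i
  have fH: "range f \<subseteq> HH" using KK_iter[OF cK] KK_sub by (auto simp: f_def)
  have "inj f"
  proof (rule injI)
    have ne: "f i \<noteq> f j" if "i < j" for i j
    proof
      assume e: "f i = f j"
      let ?w = "replicate (2*i) True @ [False, False]"
      have "f i ?w = replicate (2*i) True @ [False, True]" unfolding f_def pref_rep c1 by (rule refl)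
      moreover have "f j ?w = ?w" unfolding f_def
        by (rule fix_short[of ?c]) (fact c0, use that in simp)
      ultimately show False using e by simp
    qed
    fix i j assume "f i = f j" then show "i = j" using ne[of i j] ne[of j i]
      by (metis linorder_neqE_nat)
  qed
  then have "infinite (range f)" using finite_imageD by blast
  then show ?thesis using fH finite_subset by blast
qed


lemma finite_gens: "finite (gens k)" by (simp add: gens_def)

lemma finite_index: "finite (rcosets\<^bsub>AutG\<lparr>carrier := HH\<rparr>\<^esub> KK)"
proof -
  let ?G = "AutG\<lparr>carrier := HH\<rparr>"
  let ?Q = "?G Mod KK"
  interpret Q: comm_group ?Q
    by (rule AG.derived_quot_of_subgroup_is_comm_group[OF HH_subgroup])
  interpret N: normal KK ?G
    by (rule AG.derived_subgroup_is_normal[OF HH_subgroup])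
  let ?phi = "\<lambda>h. KK #>\<^bsub>?G\<^esub> h"
  let ?SQ = "?phi ` gens k"
  let ?W = "(\<lambda>T. finprod ?Q id T) ` Pow ?SQ"
  have gH: "gens k \<subseteq> HH" using HH_gen by blast
  have SQc: "?SQ \<subseteq> carrier ?Q"
  proof
    fix x assume "x \<in> ?SQ"
    then obtain s where s: "s \<in> gens k" "x = ?phi s" by (rule imageE) simp
    then show "x \<in> carrier ?Q" using N.rcosetsI[OF N.subset, of s] gH by (simp add: FactGroup_def subset_iff)
  qed
  have phim: "?phi (a \<circ> b) = ?phi a \<otimes>\<^bsub>?Q\<^esub> ?phi b" if "a \<in> HH" "b \<in> HH" for a b
    using N.rcos_sum[of a b] that by simp
  have phi1: "?phi id = KK"
    using N.coset_mult_one[OF N.subset] by simp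
  have SQi: "x \<otimes>\<^bsub>?Q\<^esub> x = \<one>\<^bsub>?Q\<^esub>" if xin: "x \<in> ?SQ" for x
  proof -
    obtain s where s: "s \<in> gens k" "x = ?phi s" using xin by (rule imageE) simp
    have "x \<otimes>\<^bsub>?Q\<^esub> x = ?phi (s \<circ> s)" using phim[of s s] gH s by auto
    then show ?thesis using gens_invol[OF s(1)] phi1 by simp
  qed
  have sing: "?phi s \<in> ?W" if "s \<in> gens k" for s
  proof -
    have "?phi s \<in> carrier ?Q" using SQc that by blast
    then have "finprod ?Q id {?phi s} = ?phi s"
    proof -
      assume c: "?phi s \<in> carrier ?Q"
      have "finprod ?Q id (insert (?phi s) {}) = id (?phi s) \<otimes>\<^bsub>?Q\<^esub> finprod ?Q id {}"
        by (rule Q.finprod_insert) (use c in auto)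
      also have "\<dots> = ?phi s" by (simp only: id_apply Q.finprod_empty Q.r_one[OF c])
      finally show ?thesis .
    qed
    then show ?thesis using that by (intro image_eqI[of _ _ "{?phi s}"]) auto
  qed
  have main: "?phi h \<in> ?W" if "h \<in> HH" for h
    using that
  proof (induction rule: generate.induct)
    case one
    have "?phi \<one>\<^bsub>AutG\<^esub> = finprod ?Q id {}"
      by (simp only: AutG_simps(3) phi1 Q.finprod_empty one_FactGroup)
    then show ?case by blast
  next
    case (incl h) then show ?case by (rule sing)
  next
    case (inv h) show ?case unfolding gens_inv[OF inv] by (rule sing[OF inv])
  next
    case (eng h1 h2)
    obtain T1 where T1: "T1 \<subseteq> ?SQ" "?phi h1 = finprod ?Q id T1" using eng.IH(1) by blast
    obtain T2 where T2: "T2 \<subseteq> ?SQ" "?phi h2 = finprod ?Q id T2" using eng.IH(2) by blast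
    have "?phi (h1 \<otimes>\<^bsub>AutG\<^esub> h2) = finprod ?Q id T1 \<otimes>\<^bsub>?Q\<^esub> finprod ?Q id T2"
      using phim[OF eng.hyps] T1 T2 by simp
    also have "\<dots> = finprod ?Q id ((T1 - T2) \<union> (T2 - T1))"
      by (rule Q.finprod_sym_diff[OF _ SQc SQi T1(1) T2(1)]) (simp add: finite_gens)
    finally show ?case using T1 T2 by blast
  qed
  have "rcosets\<^bsub>?G\<^esub> KK \<subseteq> ?W"
    using main by (auto simp: RCOSETS_def)
  moreover have "finite ?W" using finite_gens by simp
  ultimately show ?thesis using finite_subset by blast
qed

end


theorem mainTheorem17:
  fixes k :: nat
  assumes "k \<ge> 1"
  defines "H \<equiv> generate AutG ((\<lambda>i. rgen i) ` {0..k} \<union> {bgen k 0, bgen k 1, bgen k 2})"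
  shows "regular_branch H (derived AutG H)"
proof -
  have HH: "H = generate AutG (gens k)" by (simp add: H_def gens_def)
  have k1: "1 \<le> k" using assms(1) .
  show ?thesis
    unfolding regular_branch_def HH
  proof (intro conjI ballI allI)
    show "subgroup (generate AutG (gens k)) AutG" by (rule HH_subgroup[OF k1])
    show "infinite (generate AutG (gens k))" by (rule HH_infinite[OF k1])
    show "derived AutG (generate AutG (gens k)) \<subseteq> generate AutG (gens k)" by (rule KK_sub[OF k1])
    show "derived AutG (generate AutG (gens k)) \<lhd> AutG\<lparr>carrier := generate AutG (gens k)\<rparr>"
      by (rule AG.derived_subgroup_is_normal[OF HH_subgroup[OF k1]])
    show "finite (rcosets\<^bsub>AutG\<lparr>carrier := generate AutG (gens k)\<rparr>\<^esub> derived AutG (generate AutG (gens k)))"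
      by (rule finite_index[OF k1])
    fix g x assume g: "g \<in> derived AutG (generate AutG (gens k))"
    show "delta x g \<in> derived AutG (generate AutG (gens k))"
      by (cases x) (use dT_KK[OF k1 g] dF_KK[OF k1 g] in auto)
  qed
qed

end
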